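(* Let $\mathcal X\subseteq\mathbb R^m$ be nonempty, convex and compact with diameter $D>0$, $F:\mathbb R^m\to\mathbb R^r$ affine, $C\in\mathbb R^{r\times n}$ with nonzero columns, $\Theta(x,y)=\frac12\|F(x)-Cy\|^2$, and $L>0$ such that for every $y\in\{0,1\}^n$, $\Theta(\cdot,y)$ is $L$-Lipschitz on $\mathcal X$ and $\|\nabla_x\Theta(x,y)\|\le L$ on $\mathcal X$. Given $\epsilon>0$ set $K=\lceil 9((D^2+L^2)/(2\epsilon))^2\rceil$, choose $x_0\in\mathcal X$, and for $k=0,\dots,K-1$ let $y_k=\operatorname{DG}(\Theta(x_k,\cdot))$, $x_{k+1}=\operatorname{Proj}_{\mathcal X}(x_k-K^{-1/2}\nabla_x\Theta(x_k,y_k))$; output $\hat x=\frac1K\sum_{k=0}^{K-1}x_k$ and $\hat y=\operatorname{DG}(\Theta(\hat x,\cdot))$. If $C$ is obtuse, $(\hat x,\hat y)$ is a $(\frac13,\epsilon)$-approximate minimax point of $\min_{x\in\mathcal X}\max_{y\in\{0,1\}^n}\Theta(x,y)$. If the columns of $C$ are mutually orthogonal, $(\hat x,\hat y)$ is an $\epsilon$-global minimax point of that problem.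
   Context: $C=(c_1,\dots,c_n)$ is obtuse if $c_i^\top c_j\le0$ for all $i\neq j$. $\operatorname{Proj}_{\mathcal X}$ is Euclidean projection. $\operatorname{DG}(\Theta(x,\cdot))$ is the double greedy procedure: $\underline y^0=\mathbf 0$, $\overline y^0=\mathbf 1$; for $k=1,\dots,n$, with $a=\Theta(x,\underline y^{k-1}+\mathbf e_k)-\Theta(x,\underline y^{k-1})$ and $b=\Theta(x,\overline y^{k-1}-\mathbf e_k)-\Theta(x,\overline y^{k-1})$, if $a\ge b$ set $\underline y^k=\underline y^{k-1}+\mathbf e_k,\ \overline y^k=\overline y^{k-1}$, else $\underline y^k=\underline y^{k-1},\ \overline y^k=\overline y^{k-1}-\mathbf e_k$; return $\underline y^n(=\overline y^n)$. With $\mathcal Y=\{0,1\}^n$, $(x^*,y^* )\in\mathcal X\times\mathcal Y$ is an $(\alpha,\epsilon)$-approximate minimax point if $\alpha\max_{y\in\mathcal Y}\Theta(x^*,y)\le\Theta(x^*,y^* )\le\frac1\alpha\min_{x\in\mathcal X}\max_{y\in\mathcal Y}\Theta(x,y)+\epsilon$; an $\epsilon$-global minimax point is an $(1,\epsilon)$-approximate minimax point. *)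

theory Defs
  imports "HOL-Analysis.Analysis"
begin

text \<open>Binary vectors y in {0,1}^n, represented as functions nat => real that are
  0/1 on coordinates 0..n-1 and 0 elsewhere. Coordinate k of the paper (1-based) is
  index k-1 here.\<close>
definition binvecs :: "nat \<Rightarrow> (nat \<Rightarrow> real) set" where
  "binvecs n = {y. (\<forall>j<n. y j = 0 \<or> y j = 1) \<and> (\<forall>j\<ge>n. y j = 0)}"

definition matvec :: "(nat \<Rightarrow> 'r::real_vector) \<Rightarrow> nat \<Rightarrow> (nat \<Rightarrow> real) \<Rightarrow> 'r" where
  "matvec c n y = (\<Sum>j<n. y j *\<^sub>R c j)"

definition Theta :: "('m \<Rightarrow> 'r::real_normed_vector) \<Rightarrow> (nat \<Rightarrow> 'r) \<Rightarrow> nat \<Rightarrow> 'm \<Rightarrow> (nat \<Rightarrow> real) \<Rightarrow> real" where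
  "Theta F c n x y = (1/2) * (norm (F x - matvec c n y))\<^sup>2"

definition grad :: "('a::real_inner \<Rightarrow> real) \<Rightarrow> 'a \<Rightarrow> 'a" where
  "grad g x = (THE v. (g has_derivative (\<lambda>h. v \<bullet> h)) (at x))"

fun dg_state :: "((nat \<Rightarrow> real) \<Rightarrow> real) \<Rightarrow> nat \<Rightarrow> nat \<Rightarrow> (nat \<Rightarrow> real) \<times> (nat \<Rightarrow> real)" where
  "dg_state f n 0 = ((\<lambda>_. 0), (\<lambda>j. if j < n then 1 else 0))"
| "dg_state f n (Suc k) =
     (let lo = fst (dg_state f n k); up = snd (dg_state f n k);
          a = f (lo(k := 1)) - f lo;
          b = f (up(k := 0)) - f up
      in if a \<ge> b then (lo(k := 1), up) else (lo, up(k := 0)))"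

definition DG :: "((nat \<Rightarrow> real) \<Rightarrow> real) \<Rightarrow> nat \<Rightarrow> nat \<Rightarrow> real" where
  "DG f n = fst (dg_state f n n)"

definition obtuse :: "(nat \<Rightarrow> 'r::real_inner) \<Rightarrow> nat \<Rightarrow> bool" where
  "obtuse c n \<longleftrightarrow> (\<forall>i<n. \<forall>j<n. i \<noteq> j \<longrightarrow> c i \<bullet> c j \<le> 0)"

definition approx_minimax ::
  "('x \<Rightarrow> 'y \<Rightarrow> real) \<Rightarrow> 'x set \<Rightarrow> 'y set \<Rightarrow> real \<Rightarrow> real \<Rightarrow> 'x \<Rightarrow> 'y \<Rightarrow> bool" where
  "approx_minimax \<Theta> X Y \<alpha> \<epsilon> xs ys \<longleftrightarrow>
     xs \<in> X \<and> ys \<in> Y \<and>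
     \<alpha> * (SUP y\<in>Y. \<Theta> xs y) \<le> \<Theta> xs ys \<and>
     \<Theta> xs ys \<le> (1/\<alpha>) * (INF x\<in>X. SUP y\<in>Y. \<Theta> x y) + \<epsilon>"

primrec gd_iter :: "'m::{real_inner,heine_borel} set \<Rightarrow> ('m \<Rightarrow> (nat \<Rightarrow> real) \<Rightarrow> real) \<Rightarrow> nat \<Rightarrow> nat \<Rightarrow> 'm \<Rightarrow> nat \<Rightarrow> 'm" where
  "gd_iter X \<Theta> n K x0 0 = x0"
| "gd_iter X \<Theta> n K x0 (Suc k) =
     (let xk = gd_iter X \<Theta> n K x0 k; yk = DG (\<Theta> xk) n
      in closest_point X (xk - (1 / sqrt (real K)) *\<^sub>R grad (\<lambda>x. \<Theta> x yk) xk))"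

end

theory Submission
  imports Defs
begin


lemma binvecs_upd: "y \<in> binvecs n \<Longrightarrow> k < n \<Longrightarrow> v = 0 \<or> v = 1 \<Longrightarrow> y(k := v) \<in> binvecs n"
  by (auto simp: binvecs_def)

lemma binvecs_01: "y \<in> binvecs n \<Longrightarrow> 0 \<le> y j \<and> y j \<le> 1"
  unfolding binvecs_def by (cases "j < n") force+

definition submod :: "((nat \<Rightarrow> real) \<Rightarrow> real) \<Rightarrow> nat \<Rightarrow> bool" where
  "submod f n \<longleftrightarrow> (\<forall>y y' k. y \<in> binvecs n \<longrightarrow> y' \<in> binvecs n \<longrightarrow> (\<forall>j. y j \<le> y' j) \<longrightarrow> k < n
      \<longrightarrow> y' k = 0 \<longrightarrow> f (y'(k:=1)) - f y' \<le> f (y(k:=1)) - f y)"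

definition modular :: "((nat \<Rightarrow> real) \<Rightarrow> real) \<Rightarrow> nat \<Rightarrow> bool" where
  "modular f n \<longleftrightarrow> (\<forall>y y' k. y \<in> binvecs n \<longrightarrow> y' \<in> binvecs n \<longrightarrow> k < n
      \<longrightarrow> y k = 0 \<longrightarrow> y' k = 0 \<longrightarrow> f (y'(k:=1)) - f y' = f (y(k:=1)) - f y)"

lemma dg_inv:
  assumes "k \<le> n"
  shows "fst (dg_state f n k) \<in> binvecs n \<and> snd (dg_state f n k) \<in> binvecs n
    \<and> (\<forall>j\<ge>k. fst (dg_state f n k) j = 0) \<and> (\<forall>j. k \<le> j \<and> j < n \<longrightarrow> snd (dg_state f n k) j = 1)
    \<and> (\<forall>j<k. snd (dg_state f n k) j = fst (dg_state f n k) j)"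
  using assms
proof (induction k)
  case 0
  then show ?case by (auto simp: binvecs_def)
next
  case (Suc k)
  obtain lo up where lu: "dg_state f n k = (lo, up)" by (cases "dg_state f n k")
  from Suc lu have I: "lo \<in> binvecs n" "up \<in> binvecs n" "\<forall>j\<ge>k. lo j = 0"
    "\<forall>j. k \<le> j \<and> j < n \<longrightarrow> up j = 1" "\<forall>j<k. up j = lo j" by auto
  have kn: "k < n" using Suc by simp
  show ?case
  proof (cases "f (lo(k := 1)) - f lo \<ge> f (up(k := 0)) - f up")
    case True
    then have "dg_state f n (Suc k) = (lo(k:=1), up)" using lu by (simp add: Let_def)
    then show ?thesis using I kn by (auto simp: less_Suc_eq binvecs_def)
  next
    case False
    then have "dg_state f n (Suc k) = (lo, up(k:=0))" using lu by (simp add: Let_def)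
    then show ?thesis using I kn by (auto simp: less_Suc_eq binvecs_def)
  qed
qed

lemma dg_final:
  "DG f n \<in> binvecs n \<and> snd (dg_state f n n) = DG f n"
proof -
  have I: "fst (dg_state f n n) \<in> binvecs n" "snd (dg_state f n n) \<in> binvecs n"
     "\<forall>j<n. snd (dg_state f n n) j = fst (dg_state f n n) j"
    using dg_inv[of n n f] by auto
  have "snd (dg_state f n n) = fst (dg_state f n n)"
  proof
    fix j show "snd (dg_state f n n) j = fst (dg_state f n n) j"
      using I by (cases "j < n") (auto simp: binvecs_def)
  qed
  then show ?thesis using I by (simp add: DG_def)
qed

lemma dg_third:
  assumes sm: "submod f n" and nn: "\<forall>y\<in>binvecs n. 0 \<le> f y" and opt: "opt \<in> binvecs n"
  shows "f opt \<le> 3 * f (DG f n)"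
proof -
  define lo where "lo k = fst (dg_state f n k)" for k
  define up where "up k = snd (dg_state f n k)" for k
  define ok where "ok k = (\<lambda>j. if j < k then lo k j else opt j)" for k
  have claim: "k \<le> n \<Longrightarrow> f opt - f (ok k) \<le> f (lo k) - f (lo 0) + f (up k) - f (up 0)" for k
  proof (induction k)
    case 0
    then show ?case by (simp add: ok_def)
  next
    case (Suc k)
    have kn: "k < n" using Suc by simp
    from dg_inv[of k n f] kn have I: "lo k \<in> binvecs n" "up k \<in> binvecs n" "\<forall>j\<ge>k. lo k j = 0"
      "\<forall>j. k \<le> j \<and> j < n \<longrightarrow> up k j = 1" "\<forall>j<k. up k j = lo k j"
      unfolding lo_def up_def by auto
    define a where "a = f ((lo k)(k := 1)) - f (lo k)"
    define b where "b = f ((up k)(k := 0)) - f (up k)"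
    have loS: "lo (Suc k) = (if a \<ge> b then (lo k)(k:=1) else lo k)"
      and upS: "up (Suc k) = (if a \<ge> b then up k else (up k)(k:=0))"
      unfolding lo_def up_def a_def b_def by (simp_all add: Let_def lo_def up_def)
    have okS: "ok (Suc k) = (ok k)(k := if a \<ge> b then 1 else 0)"
      using I(3) by (intro ext) (auto simp: ok_def loS less_Suc_eq)
    have okk: "ok k k = opt k" by (simp add: ok_def)
    have okb: "ok k \<in> binvecs n" using I(1) opt by (auto simp: ok_def binvecs_def)
    have upk1: "up k k = 1" using I(4) kn by simp
    have up01: "((up k)(k:=0))(k:=1) = up k" using upk1 by auto
    have upb0: "(up k)(k:=0) \<in> binvecs n" using binvecs_upd I(2) kn by blast
    have lok0: "lo k k = 0" using I(3) by simp
    have ab: "a + b \<ge> 0"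
    proof -
      have le: "\<forall>j. lo k j \<le> ((up k)(k:=0)) j"
      proof
        fix j show "lo k j \<le> ((up k)(k:=0)) j"
          using I binvecs_01[OF I(1), of j] binvecs_01[OF I(2), of j] by (cases "j < k") (auto simp: not_less)
      qed
      have "f (((up k)(k:=0))(k:=1)) - f ((up k)(k:=0)) \<le> f ((lo k)(k:=1)) - f (lo k)"
        using sm[unfolded submod_def, rule_format, OF I(1) upb0 le[rule_format] kn fun_upd_same] .
      then show ?thesis unfolding a_def b_def up01 by simp
    qed
    have step: "f (ok k) - f (ok (Suc k)) \<le> (f (lo (Suc k)) - f (lo k)) + (f (up (Suc k)) - f (up k))"
    proof (cases "a \<ge> b")
      case True
      show ?thesis
      proof (cases "opt k = 1")
        case True
        then have "ok (Suc k) = ok k" using okS okk \<open>a \<ge> b\<close> by auto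
        then show ?thesis using loS upS \<open>a \<ge> b\<close> ab a_def by auto
      next
        case False
        then have ok0: "ok k k = 0" using okk binvecs_def opt kn by auto
        have le: "\<forall>j. ok k j \<le> ((up k)(k:=0)) j"
        proof
          fix j show "ok k j \<le> ((up k)(k:=0)) j"
            using I ok0 binvecs_01[OF opt, of j] opt
            by (cases "j < k"; cases "j < n") (auto simp: ok_def binvecs_def not_less)
        qed
        have "f (((up k)(k:=0))(k:=1)) - f ((up k)(k:=0)) \<le> f ((ok k)(k:=1)) - f (ok k)"
          using sm[unfolded submod_def, rule_format, OF okb upb0 le[rule_format] kn fun_upd_same] .
        then show ?thesis using loS upS okS \<open>a \<ge> b\<close> unfolding up01 a_def b_def by auto
      qed
    next
      case False
      show ?thesis
      proof (cases "opt k = 1")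
        case False
        then have "ok k k = 0" using okk opt kn by (auto simp: binvecs_def)
        then have "ok (Suc k) = ok k" using okS \<open>\<not> a \<ge> b\<close> by (auto intro!: ext)
        then show ?thesis using loS upS \<open>\<not> a \<ge> b\<close> ab b_def by auto
      next
        case True
        have okb0: "(ok k)(k:=0) \<in> binvecs n" using binvecs_upd okb kn by blast
        have le: "\<forall>j. lo k j \<le> ((ok k)(k:=0)) j"
        proof
          fix j show "lo k j \<le> ((ok k)(k:=0)) j"
            using I binvecs_01[OF opt, of j]
            by (cases "j < k") (auto simp: ok_def not_less)
        qed
        have e: "((ok k)(k:=0))(k:=1) = ok k" using True okk by auto
        have "f (((ok k)(k:=0))(k:=1)) - f ((ok k)(k:=0)) \<le> f ((lo k)(k:=1)) - f (lo k)"
          using sm[unfolded submod_def, rule_format, OF I(1) okb0 le[rule_format] kn fun_upd_same] .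
        then show ?thesis using loS upS okS \<open>\<not> a \<ge> b\<close> unfolding e a_def b_def by auto
      qed
    qed
    then show ?case using Suc by simp
  qed
  have fin: "f opt - f (ok n) \<le> f (lo n) - f (lo 0) + f (up n) - f (up 0)" using claim by simp
  have okn: "ok n = lo n"
  proof
    fix j show "ok n j = lo n j"
      using dg_inv[of n n f] opt unfolding ok_def lo_def binvecs_def by auto
  qed
  have upn: "up n = lo n" "lo n = DG f n" using dg_final[of f n] unfolding up_def lo_def DG_def by auto
  have "lo 0 \<in> binvecs n" "up 0 \<in> binvecs n" using dg_inv[of 0 n f] unfolding lo_def up_def by auto
  then have "f (lo 0) \<ge> 0" "f (up 0) \<ge> 0" using nn by auto
  then show ?thesis using fin unfolding okn upn by linarith
qed


lemma dg_exact:
  assumes sm: "modular f n" and opt: "opt \<in> binvecs n"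
  shows "f opt \<le> f (DG f n)"
proof -
  define lo where "lo k = fst (dg_state f n k)" for k
  define up where "up k = snd (dg_state f n k)" for k
  define ok where "ok k = (\<lambda>j. if j < k then lo k j else opt j)" for k
  have claim: "k \<le> n \<Longrightarrow> f opt \<le> f (ok k)" for k
  proof (induction k)
    case 0
    then show ?case by (simp add: ok_def)
  next
    case (Suc k)
    have kn: "k < n" using Suc by simp
    from dg_inv[of k n f] kn have I: "lo k \<in> binvecs n" "up k \<in> binvecs n" "\<forall>j\<ge>k. lo k j = 0"
      "\<forall>j. k \<le> j \<and> j < n \<longrightarrow> up k j = 1" "\<forall>j<k. up k j = lo k j"
      unfolding lo_def up_def by auto
    define a where "a = f ((lo k)(k := 1)) - f (lo k)"
    define b where "b = f ((up k)(k := 0)) - f (up k)"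
    have loS: "lo (Suc k) = (if a \<ge> b then (lo k)(k:=1) else lo k)"
      unfolding lo_def up_def a_def b_def by (simp_all add: Let_def lo_def up_def)
    have okS: "ok (Suc k) = (ok k)(k := if a \<ge> b then 1 else 0)"
      using I(3) by (intro ext) (auto simp: ok_def loS less_Suc_eq)
    have okk: "ok k k = opt k" by (simp add: ok_def)
    have okb: "ok k \<in> binvecs n" using I(1) opt by (auto simp: ok_def binvecs_def)
    have upk1: "up k k = 1" using I(4) kn by simp
    have up01: "((up k)(k:=0))(k:=1) = up k" using upk1 by auto
    have upb0: "(up k)(k:=0) \<in> binvecs n" using binvecs_upd I(2) kn by blast
    have lok0: "lo k k = 0" using I(3) by simp
    have ab: "b = - a"
    proof -
      have "f (((up k)(k:=0))(k:=1)) - f ((up k)(k:=0)) = f ((lo k)(k:=1)) - f (lo k)"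
        using sm[unfolded modular_def, rule_format, OF I(1) upb0 kn lok0 fun_upd_same] .
      then show ?thesis unfolding a_def b_def up01 by simp
    qed
    have step: "f (ok k) \<le> f (ok (Suc k))"
    proof (cases "a \<ge> b")
      case True
      show ?thesis
      proof (cases "opt k = 1")
        case True
        then have "ok (Suc k) = ok k" using okS okk \<open>a \<ge> b\<close> by auto
        then show ?thesis by simp
      next
        case False
        then have ok0: "ok k k = 0" using okk binvecs_def opt kn by auto
        have "f ((ok k)(k:=1)) - f (ok k) = f ((lo k)(k:=1)) - f (lo k)"
          using sm[unfolded modular_def, rule_format, OF I(1) okb kn lok0 ok0] .
        then show ?thesis using okS \<open>a \<ge> b\<close> ab unfolding a_def by auto
      qed
    next
      case False
      show ?thesis
      proof (cases "opt k = 1")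
        case False
        then have "ok k k = 0" using okk opt kn by (auto simp: binvecs_def)
        then have "ok (Suc k) = ok k" using okS \<open>\<not> a \<ge> b\<close> by (auto intro!: ext)
        then show ?thesis by simp
      next
        case True
        have okb0: "(ok k)(k:=0) \<in> binvecs n" using binvecs_upd okb kn by blast
        have e: "((ok k)(k:=0))(k:=1) = ok k" using True okk by auto
        have "f (((ok k)(k:=0))(k:=1)) - f ((ok k)(k:=0)) = f ((lo k)(k:=1)) - f (lo k)"
          using sm[unfolded modular_def, rule_format, OF I(1) okb0 kn lok0 fun_upd_same] .
        then show ?thesis using okS \<open>\<not> a \<ge> b\<close> ab unfolding e a_def by auto
      qed
    qed
    then show ?case using Suc by simp
  qed
  have okn: "ok n = lo n"
  proof
    fix j show "ok n j = lo n j"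
      using dg_inv[of n n f] opt unfolding ok_def lo_def binvecs_def by auto
  qed
  show ?thesis using claim[of n] okn unfolding lo_def DG_def by simp
qed



lemma matvec_upd:
  assumes "y k = 0" "k < n"
  shows "matvec c n (y(k:=1)) = matvec c n y + c k"
proof -
  have "matvec c n (y(k:=1)) = (\<Sum>j<n. y j *\<^sub>R c j + (if j = k then c k else 0))"
    unfolding matvec_def using assms(1) by (intro sum.cong) auto
  also have "\<dots> = matvec c n y + c k"
    unfolding matvec_def sum.distrib using assms(2) by (simp add: sum.delta)
  finally show ?thesis .
qed

lemma theta_marg:
  fixes c :: "nat \<Rightarrow> 'r::real_inner"
  assumes "y k = 0" "k < n"
  shows "Theta F c n x (y(k:=1)) - Theta F c n x y = - ((F x - matvec c n y) \<bullet> c k) + (1/2) * (c k \<bullet> c k)"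
  unfolding Theta_def matvec_upd[of y k n c, OF assms] power2_norm_eq_inner
  by (simp add: algebra_simps inner_diff_left inner_diff_right inner_commute)

lemma matvec_diff_inner:
  fixes c :: "nat \<Rightarrow> 'r::real_inner"
  shows "(matvec c n y' - matvec c n y) \<bullet> v = (\<Sum>j<n. (y' j - y j) * (c j \<bullet> v))"
  unfolding matvec_def by (simp add: sum_subtractf[symmetric] inner_sum_left algebra_simps)

lemma theta_submod:
  fixes c :: "nat \<Rightarrow> 'r::real_inner"
  assumes "obtuse c n"
  shows "submod (Theta F c n x) n"
  unfolding submod_def
proof (intro allI impI)
  fix y y' k assume y: "y \<in> binvecs n" and y': "y' \<in> binvecs n" and le: "\<forall>j. y j \<le> y' j"
    and kn: "k < n" and yk: "y' k = 0"
  have yk0: "y k = 0" using le yk binvecs_01[OF y, of k] by (metis order_antisym)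
  have "(\<Sum>j<n. (y' j - y j) * (c j \<bullet> c k)) \<le> 0"
  proof (rule sum_nonpos)
    fix j assume j: "j \<in> {..<n}"
    show "(y' j - y j) * (c j \<bullet> c k) \<le> 0"
    proof (cases "j = k")
      case True then show ?thesis using yk yk0 by simp
    next
      case False
      then have "c j \<bullet> c k \<le> 0" using assms j kn unfolding obtuse_def by auto
      moreover have "y' j - y j \<ge> 0" using le by (simp)
      ultimately show ?thesis by (simp add: mult_nonneg_nonpos)
    qed
  qed
  then have "(matvec c n y' - matvec c n y) \<bullet> c k \<le> 0" by (simp add: matvec_diff_inner)
  then show "Theta F c n x (y'(k := 1)) - Theta F c n x y' \<le> Theta F c n x (y(k := 1)) - Theta F c n x y"
    unfolding theta_marg[of y' k n F c x, OF yk kn] theta_marg[of y k n F c x, OF yk0 kn] by (simp add: inner_diff_left)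
qed

lemma theta_modular:
  fixes c :: "nat \<Rightarrow> 'r::real_inner"
  assumes "\<forall>i<n. \<forall>j<n. i \<noteq> j \<longrightarrow> c i \<bullet> c j = 0"
  shows "modular (Theta F c n x) n"
  unfolding modular_def
proof (intro allI impI)
  fix y y' k assume y: "y \<in> binvecs n" and y': "y' \<in> binvecs n"
    and kn: "k < n" and yk0: "y k = 0" and yk: "y' k = 0"
  have "(\<Sum>j<n. (y' j - y j) * (c j \<bullet> c k)) = 0"
  proof (rule sum.neutral, rule ballI)
    fix j assume j: "j \<in> {..<n}"
    show "(y' j - y j) * (c j \<bullet> c k) = 0"
      using assms j kn yk yk0 by (cases "j = k") auto
  qed
  then have "(matvec c n y' - matvec c n y) \<bullet> c k = 0" by (simp add: matvec_diff_inner)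
  then show "Theta F c n x (y'(k := 1)) - Theta F c n x y' = Theta F c n x (y(k := 1)) - Theta F c n x y"
    unfolding theta_marg[of y' k n F c x, OF yk kn] theta_marg[of y k n F c x, OF yk0 kn] by (simp add: inner_diff_left)
qed


lemma theta_has_deriv:
  fixes A :: "real^'m^'r" and b :: "real^'r" and M :: "real^'r"
  shows "((\<lambda>x. (1/2) * (norm (A *v x + b - M))\<^sup>2) has_derivative (\<lambda>h. ((A *v x + b - M) v* A) \<bullet> h)) (at x)"
proof -
  have bl: "bounded_linear ((*v) A)" by simp
  have d0: "((*v) A has_derivative (*v) A) (at x)" by (rule bounded_linear_imp_has_derivative[OF bl])
  have d: "((\<lambda>x. A *v x + b - M) has_derivative (*v) A) (at x)"
    using has_derivative_diff[OF has_derivative_add_const[OF bounded_linear_imp_has_derivative[OF bl]] has_derivative_const, of b M "at x"]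
    by simp
  have "((\<lambda>x. (1/2) * ((A *v x + b - M) \<bullet> (A *v x + b - M))) has_derivative (\<lambda>h. (1/2) * ((A *v x + b - M) \<bullet> (A *v h) + (A *v h) \<bullet> (A *v x + b - M)))) (at x)"
    by (intro derivative_eq_intros d) (use d0 in auto)
  moreover have "(\<lambda>h. (1/2) * ((A *v x + b - M) \<bullet> (A *v h) + (A *v h) \<bullet> (A *v x + b - M))) = (\<lambda>h. ((A *v x + b - M) v* A) \<bullet> h)"
    by (rule ext) (simp add: dot_lmul_matrix inner_commute[of "A *v _"])
  ultimately show ?thesis by (simp add: power2_norm_eq_inner)
qed

lemma grad_unique:
  fixes v :: "'a::real_inner"
  assumes "(g has_derivative (\<lambda>h. v \<bullet> h)) (at x)"
  shows "grad g x = v"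
  unfolding grad_def
proof (rule the_equality)
  show "(g has_derivative (\<bullet>) v) (at x)" using assms by simp
  fix w assume "(g has_derivative (\<bullet>) w) (at x)"
  then have "(\<lambda>h. w \<bullet> h) = (\<lambda>h. v \<bullet> h)" using has_derivative_unique assms by blast
  then have "w \<bullet> (w - v) = v \<bullet> (w - v)" by metis
  then have "(w - v) \<bullet> (w - v) = 0" by (simp add: inner_diff_left)
  then show "w = v" by simp
qed

lemma theta_grad:
  fixes A :: "real^'m^'r" and b :: "real^'r"
  shows "grad (\<lambda>x'. Theta (\<lambda>x. A *v x + b) c n x' y) x = ((A *v x + b - matvec c n y) v* A)"
  unfolding Theta_def by (rule grad_unique[OF theta_has_deriv])

lemma theta_lower:
  fixes A :: "real^'m^'r" and b :: "real^'r"
  shows "Theta (\<lambda>x. A *v x + b) c n x y + ((A *v x + b - matvec c n y) v* A) \<bullet> (z - x)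
     \<le> Theta (\<lambda>x. A *v x + b) c n z y"
proof -
  define u where "u = A *v x + b - matvec c n y"
  define d where "d = A *v (z - x)"
  have e: "A *v z + b - matvec c n y = u + d" unfolding u_def d_def by (simp add: algebra_simps)
  have "((A *v x + b - matvec c n y) v* A) \<bullet> (z - x) = u \<bullet> d"
    unfolding u_def d_def by (simp add: dot_lmul_matrix)
  moreover have "(1/2) * (norm (u + d))\<^sup>2 = (1/2) * (norm u)\<^sup>2 + u \<bullet> d + (1/2) * (d \<bullet> d)"
    by (simp add: power2_norm_eq_inner algebra_simps inner_commute)
  moreover have "d \<bullet> d \<ge> 0" by simp
  ultimately show ?thesis unfolding Theta_def e u_def[symmetric] by simp
qed

lemma finite_binvecs: "finite (binvecs n)" and binvecs_ne: "binvecs n \<noteq> {}"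
proof -
  have "binvecs n \<subseteq> (\<lambda>S j. if j \<in> S then 1 else 0) ` Pow {..<n}"
  proof
    fix y assume y: "y \<in> binvecs n"
    have "y = (\<lambda>j. if j \<in> {j. j < n \<and> y j = 1} then 1 else 0)"
    proof
      fix j show "y j = (if j \<in> {j. j < n \<and> y j = 1} then 1 else 0)"
        using y unfolding binvecs_def by (cases "j < n") auto
    qed
    then show "y \<in> (\<lambda>S j. if j \<in> S then 1 else 0) ` Pow {..<n}" by blast
  qed
  then show "finite (binvecs n)" by (rule finite_subset) simp
  have "(\<lambda>_. 0) \<in> binvecs n" by (simp add: binvecs_def)
  then show "binvecs n \<noteq> {}" by blast
qed


theorem mainTheorem10:
  fixes X :: "(real ^ 'm) set" and A :: "real ^ 'm ^ 'r" and b :: "real ^ 'r"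
    and c :: "nat \<Rightarrow> real ^ 'r" and n :: nat and L \<epsilon> :: real and x0 :: "real ^ 'm"
  defines "F \<equiv> (\<lambda>x. A *v x + b)"
  defines "D \<equiv> diameter X"
  defines "K \<equiv> nat \<lceil>9 * ((D\<^sup>2 + L\<^sup>2) / (2 * \<epsilon>))\<^sup>2\<rceil>"
  defines "xs \<equiv> gd_iter X (Theta F c n) n K x0"
  defines "xhat \<equiv> (1 / real K) *\<^sub>R (\<Sum>k<K. xs k)"
  defines "yhat \<equiv> DG (Theta F c n xhat) n"
  assumes "X \<noteq> {}" and "convex X" and "compact X" and "D > 0"
    and "\<forall>j<n. c j \<noteq> 0"
    and "L > 0"
    and "\<forall>y\<in>binvecs n. L-lipschitz_on X (\<lambda>x. Theta F c n x y)"
    and "\<forall>y\<in>binvecs n. \<forall>x\<in>X. norm (grad (\<lambda>x'. Theta F c n x' y) x) \<le> L"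
    and "\<epsilon> > 0"
    and "x0 \<in> X"
  shows "(obtuse c n \<longrightarrow> approx_minimax (Theta F c n) X (binvecs n) (1/3) \<epsilon> xhat yhat)
       \<and> ((\<forall>i<n. \<forall>j<n. i \<noteq> j \<longrightarrow> c i \<bullet> c j = 0) \<longrightarrow>
            approx_minimax (Theta F c n) X (binvecs n) 1 \<epsilon> xhat yhat)"
  proof -
  have aux_cancel: "a * a * S / (2 * a) = a * S / 2" if "a > 0" for a S :: real
    using that by (simp add: field_simps power2_eq_square)
  have closedX: "closed X" using \<open>compact X\<close> by (simp add: compact_imp_closed)
  have bddX: "bounded X" using \<open>compact X\<close> by (simp add: compact_imp_bounded)
  define phi where "phi x = (SUP y\<in>binvecs n. Theta F c n x y)" for x
  define g where "g x y = (F x - matvec c n y) v* A" for x y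
  have gradg: "grad (\<lambda>x'. Theta F c n x' y) x = g x y" for x y
    unfolding F_def g_def by (rule theta_grad)
  have lower: "Theta F c n x y + g x y \<bullet> (z - x) \<le> Theta F c n z y" for x y z
    unfolding F_def g_def by (rule theta_lower)
  have bdd: "bdd_above ((\<lambda>y. Theta F c n x y) ` binvecs n)" for x
    using finite_binvecs by simp
  have phi_ge: "y \<in> binvecs n \<Longrightarrow> Theta F c n x y \<le> phi x" for x y
    unfolding phi_def by (rule cSUP_upper[OF _ bdd])
  have phi_le: "(\<And>y. y \<in> binvecs n \<Longrightarrow> Theta F c n x y \<le> M) \<Longrightarrow> phi x \<le> M" for x M
    unfolding phi_def by (rule cSUP_least[OF binvecs_ne])
  define yk where "yk k = DG (Theta F c n (xs k)) n" for k
  define eta where "eta = 1 / sqrt (real K)"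
  have xsS: "xs (Suc k) = closest_point X (xs k - eta *\<^sub>R g (xs k) (yk k))" for k
    unfolding xs_def yk_def eta_def by (simp add: Let_def gradg)
  have xsX: "xs k \<in> X" for k
  proof (induction k)
    case 0 then show ?case using \<open>x0 \<in> X\<close> by (simp add: xs_def)
  next
    case (Suc k) then show ?case unfolding xsS using closest_point_in_set closedX \<open>X \<noteq> {}\<close> by blast
  qed
  have ykB: "yk k \<in> binvecs n" for k unfolding yk_def using dg_final by blast
  have gL: "norm (g (xs k) (yk k)) \<le> L" for k
    using \<open>\<forall>y\<in>binvecs n. \<forall>x\<in>X. norm (grad (\<lambda>x'. Theta F c n x' y) x) \<le> L\<close> ykB[of k] xsX[of k]
    unfolding gradg by blast
  define q where "q = (D\<^sup>2 + L\<^sup>2) / (2 * \<epsilon>)"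
  have qpos: "q > 0" unfolding q_def using \<open>D > 0\<close> \<open>\<epsilon> > 0\<close> by (simp add: add_pos_nonneg)
  have K9: "real K \<ge> 9 * q\<^sup>2" unfolding K_def q_def by (rule real_nat_ceiling_ge)
  have Kpos: "real K > 0" using K9 qpos by (smt (verit) zero_less_power)
  have sK: "sqrt (real K) \<ge> 3 * q"
  proof -
    have "sqrt (9 * q\<^sup>2) = 3 * q" using qpos by (simp add: real_sqrt_mult)
    then show ?thesis using K9 real_sqrt_le_mono by metis
  qed
  have sKpos: "sqrt (real K) > 0" using Kpos by simp
  have etapos: "eta > 0" unfolding eta_def using sKpos by simp
  have err: "(D\<^sup>2 + L\<^sup>2) / (2 * sqrt (real K)) \<le> \<epsilon> / 3"
  proof -
    have "(D\<^sup>2 + L\<^sup>2) = 2 * \<epsilon> * q" unfolding q_def using \<open>\<epsilon> > 0\<close> by simp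
    then have "(D\<^sup>2 + L\<^sup>2) / (2 * sqrt (real K)) = \<epsilon> * (q / sqrt (real K))" by simp
    also have "\<dots> \<le> \<epsilon> * (1/3)"
      using sK sKpos qpos \<open>\<epsilon> > 0\<close> by (intro mult_left_mono) (auto simp: field_simps)
    finally show ?thesis by simp
  qed
  have regret: "(\<Sum>k<K. Theta F c n (xs k) (yk k) - Theta F c n z (yk k))
      \<le> sqrt (real K) * (D\<^sup>2 + L\<^sup>2) / 2" if zX: "z \<in> X" for z
  proof -
    define r where "r k = (norm (xs k - z))\<^sup>2" for k
    have step: "Theta F c n (xs k) (yk k) - Theta F c n z (yk k) \<le> (r k - r (Suc k)) / (2 * eta) + eta * L\<^sup>2 / 2" for k
    proof -
      define gk where "gk = g (xs k) (yk k)"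
      have l: "Theta F c n (xs k) (yk k) - Theta F c n z (yk k) \<le> gk \<bullet> (xs k - z)"
        using lower[of "xs k" "yk k" z] unfolding gk_def by (simp add: inner_diff_right)
      have "dist (xs (Suc k)) z \<le> dist (xs k - eta *\<^sub>R gk) z"
        using closest_point_lipschitz[OF \<open>convex X\<close> closedX \<open>X \<noteq> {}\<close>, of "xs k - eta *\<^sub>R gk" z]
        unfolding xsS gk_def closest_point_self[OF zX] .
      then have "r (Suc k) \<le> (norm ((xs k - z) - eta *\<^sub>R gk))\<^sup>2"
        unfolding r_def dist_norm by (simp add: power_mono algebra_simps)
      also have "\<dots> = r k - 2 * eta * (gk \<bullet> (xs k - z)) + eta\<^sup>2 * (norm gk)\<^sup>2"
        unfolding r_def power2_norm_eq_inner
        by (simp add: inner_diff_left inner_diff_right algebra_simps inner_commute power2_eq_square)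
      also have "\<dots> \<le> r k - 2 * eta * (gk \<bullet> (xs k - z)) + eta\<^sup>2 * L\<^sup>2"
        using gL[of k] unfolding gk_def[symmetric]
        by (simp add: power_mono mult_left_mono)
      finally have "2 * eta * (gk \<bullet> (xs k - z)) \<le> r k - r (Suc k) + eta\<^sup>2 * L\<^sup>2" by simp
      then have "gk \<bullet> (xs k - z) \<le> (r k - r (Suc k)) / (2 * eta) + eta * L\<^sup>2 / 2"
        using etapos by (simp add: field_simps power2_eq_square)
      then show ?thesis using l by simp
    qed
    have "(\<Sum>k<K. Theta F c n (xs k) (yk k) - Theta F c n z (yk k))
        \<le> (\<Sum>k<K. (r k - r (Suc k)) / (2 * eta) + eta * L\<^sup>2 / 2)"
      by (rule sum_mono) (rule step)
    also have "\<dots> = (r 0 - r K) / (2 * eta) + real K * (eta * L\<^sup>2 / 2)"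
      using sum_lessThan_telescope'[of "\<lambda>k. r k" K]
      by (simp add: sum.distrib sum_divide_distrib[symmetric])
    also have "\<dots> \<le> D\<^sup>2 / (2 * eta) + real K * (eta * L\<^sup>2 / 2)"
    proof -
      have "norm (x0 - z) \<le> D" using diameter_bounded_bound[OF bddX \<open>x0 \<in> X\<close> zX]
        unfolding D_def dist_norm .
      then have "r 0 \<le> D\<^sup>2" unfolding r_def by (simp add: xs_def power_mono)
      moreover have "r K \<ge> 0" unfolding r_def by simp
      ultimately show ?thesis using etapos by (simp add: divide_right_mono)
    qed
    also have "\<dots> = sqrt (real K) * (D\<^sup>2 + L\<^sup>2) / 2"
      unfolding eta_def using sKpos Kpos
      by (simp add: field_simps)
    finally show ?thesis .
  qed
  have xhatX: "xhat \<in> X"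
  proof -
    have "xhat = (\<Sum>k<K. (1 / real K) *\<^sub>R xs k)" unfolding xhat_def by (simp add: scaleR_sum_right)
    moreover have "(\<Sum>k<K. (1 / real K) *\<^sub>R xs k) \<in> X"
      by (rule convex_sum[OF _ \<open>convex X\<close>]) (use Kpos xsX in auto)
    ultimately show ?thesis by simp
  qed
  have jensen: "real K * phi xhat \<le> (\<Sum>k<K. phi (xs k))"
  proof -
    have sx: "(\<Sum>k<K. xs k) = real K *\<^sub>R xhat" unfolding xhat_def using Kpos by simp
    have "real K * Theta F c n xhat y \<le> (\<Sum>k<K. phi (xs k))" if y: "y \<in> binvecs n" for y
    proof -
      have "(\<Sum>k<K. g xhat y \<bullet> (xs k - xhat)) = g xhat y \<bullet> (\<Sum>k<K. xs k) - real K * (g xhat y \<bullet> xhat)"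
        by (simp add: inner_diff_right inner_sum_right sum_subtractf)
      also have "\<dots> = 0" unfolding sx inner_scaleR_right by simp
      finally have z: "(\<Sum>k<K. g xhat y \<bullet> (xs k - xhat)) = 0" .
      have "real K * Theta F c n xhat y = (\<Sum>k<K. Theta F c n xhat y + g xhat y \<bullet> (xs k - xhat))"
        by (simp add: sum.distrib z)
      also have "\<dots> \<le> (\<Sum>k<K. Theta F c n (xs k) y)" by (rule sum_mono) (rule lower)
      also have "\<dots> \<le> (\<Sum>k<K. phi (xs k))" by (rule sum_mono) (rule phi_ge[OF y])
      finally show ?thesis .
    qed
    then have "phi xhat \<le> (\<Sum>k<K. phi (xs k)) / real K"
      using Kpos by (intro phi_le) (simp add: field_simps mult.commute)
    then show ?thesis using Kpos by (simp add: field_simps)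
  qed
  have gen: "approx_minimax (Theta F c n) X (binvecs n) \<alpha> \<epsilon> xhat yhat"
    if a1: "1/3 \<le> \<alpha>" and a2: "\<alpha> \<le> 1" and hdg: "\<forall>x. \<alpha> * phi x \<le> Theta F c n x (DG (Theta F c n x) n)" for \<alpha>
  proof -
    have apos: "\<alpha> > 0" using a1 by simp
    have yhatB: "yhat \<in> binvecs n" unfolding yhat_def using dg_final by blast
    have key: "\<alpha> * phi xhat \<le> phi z + \<epsilon> / 3" if zX: "z \<in> X" for z
    proof -
      have "\<alpha> * (real K * phi xhat) \<le> \<alpha> * (\<Sum>k<K. phi (xs k))"
        using jensen apos by simp
      also have "\<dots> = (\<Sum>k<K. \<alpha> * phi (xs k))" by (simp add: sum_distrib_left)
      also have "\<dots> \<le> (\<Sum>k<K. Theta F c n (xs k) (yk k))"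
        by (rule sum_mono) (use hdg yk_def in auto)
      also have "\<dots> \<le> (\<Sum>k<K. Theta F c n z (yk k)) + sqrt (real K) * (D\<^sup>2 + L\<^sup>2) / 2"
        using regret[OF zX] by (simp add: sum_subtractf)
      also have "\<dots> \<le> real K * phi z + sqrt (real K) * (D\<^sup>2 + L\<^sup>2) / 2"
      proof -
        have "(\<Sum>k<K. Theta F c n z (yk k)) \<le> (\<Sum>k<K. phi z)"
          by (rule sum_mono) (rule phi_ge[OF ykB])
        then show ?thesis by simp
      qed
      finally have h0: "\<alpha> * (real K * phi xhat) \<le> real K * phi z + sqrt (real K) * (D\<^sup>2 + L\<^sup>2) / 2" .
      have e: "sqrt (real K) * (D\<^sup>2 + L\<^sup>2) / 2 = real K * ((D\<^sup>2 + L\<^sup>2) / (2 * sqrt (real K)))"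
      proof -
        have ss: "sqrt (real K) * sqrt (real K) = real K" using Kpos by simp
        have "real K * ((D\<^sup>2 + L\<^sup>2) / (2 * sqrt (real K))) = (sqrt (real K) * sqrt (real K)) * (D\<^sup>2 + L\<^sup>2) / (2 * sqrt (real K))"
          unfolding ss by (rule times_divide_eq_right)
        also have "\<dots> = sqrt (real K) * (D\<^sup>2 + L\<^sup>2) / 2" using sKpos by (rule aux_cancel)
        finally show ?thesis by simp
      qed
      have "real K * (\<alpha> * phi xhat) \<le> real K * (phi z + (D\<^sup>2 + L\<^sup>2) / (2 * sqrt (real K)))"
        using h0 unfolding e by (simp add: algebra_simps)
      then have "\<alpha> * phi xhat \<le> phi z + (D\<^sup>2 + L\<^sup>2) / (2 * sqrt (real K))"
        using Kpos by (rule mult_left_le_imp_le)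
      then show ?thesis using err by linarith
    qed
    have up: "Theta F c n xhat yhat \<le> phi xhat" by (rule phi_ge[OF yhatB])
    have "\<alpha> * (Theta F c n xhat yhat - \<epsilon>) \<le> (INF x\<in>X. phi x)"
    proof (rule cINF_greatest[OF \<open>X \<noteq> {}\<close>])
      fix z assume zX: "z \<in> X"
      have "\<alpha> * Theta F c n xhat yhat \<le> phi z + \<epsilon> / 3" using key[OF zX] up apos
        by (smt (verit) mult_left_mono)
      moreover have "\<epsilon> / 3 \<le> \<alpha> * \<epsilon>" using a1 \<open>\<epsilon> > 0\<close> by simp
      ultimately show "\<alpha> * (Theta F c n xhat yhat - \<epsilon>) \<le> phi z" by (simp add: algebra_simps)
    qed
    then have "Theta F c n xhat yhat \<le> (1/\<alpha>) * (INF x\<in>X. phi x) + \<epsilon>"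
      using apos by (simp add: field_simps)
    moreover have "\<alpha> * phi xhat \<le> Theta F c n xhat yhat" using hdg unfolding yhat_def by simp
    ultimately show ?thesis unfolding approx_minimax_def phi_def using xhatX yhatB by simp
  qed
  have nn: "\<forall>y\<in>binvecs n. 0 \<le> Theta F c n x y" for x by (simp add: Theta_def)
  show ?thesis
  proof (intro conjI impI)
    assume ob: "obtuse c n"
    show "approx_minimax (Theta F c n) X (binvecs n) (1/3) \<epsilon> xhat yhat"
    proof (rule gen)
      show "\<forall>x. 1/3 * phi x \<le> Theta F c n x (DG (Theta F c n x) n)"
      proof
        fix x
        have "phi x \<le> 3 * Theta F c n x (DG (Theta F c n x) n)"
          by (rule phi_le) (rule dg_third[OF theta_submod[OF ob] nn])
        then show "1/3 * phi x \<le> Theta F c n x (DG (Theta F c n x) n)" by simp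
      qed
    qed simp_all
  next
    assume orth: "\<forall>i<n. \<forall>j<n. i \<noteq> j \<longrightarrow> c i \<bullet> c j = 0"
    show "approx_minimax (Theta F c n) X (binvecs n) 1 \<epsilon> xhat yhat"
    proof (rule gen)
      show "\<forall>x. 1 * phi x \<le> Theta F c n x (DG (Theta F c n x) n)"
      proof
        fix x
        show "1 * phi x \<le> Theta F c n x (DG (Theta F c n x) n)"
          by simp (rule phi_le, rule dg_exact[OF theta_modular[OF orth]])
      qed
    qed simp_all
  qed
qed

end
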